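(* Let $\Sigma=(\sigma_0,\sigma_\infty,\sigma_1,\tau)$ be a special admissible 4-tuple in $S_{2n}^4$ such that $\sigma_1\tau$ is a product of $n-3$ disjoint transpositions and a disjoint 3-cycle. Then there exist integers $h,k$ with $1\le h\le n-2$, $h<k<2n-h$ and $h\equiv k\pmod 2$ such that $\sigma_0=\prod_{i=1}^{h}(i,2n+1-i)\prod_{j=1}^{(k-h)/2}(h+j,k+1-j)\prod_{t=1}^{(2n-h-k)/2}(k+t,2n-h+1-t)$ and $\sigma_1\tau=\prod_{i=1}^{h-1}(i,2n-i)\prod_{j=1}^{(k-h)/2-1}(h+j,k-j)\prod_{t=1}^{(2n-h-k)/2-1}(k+t,2n-h-t)\,\cdot(2n-h,\,h,\,k)$. In particular $\sigma_1\tau$ fixes exactly the three indices $2n$, $(k+h)/2$ and $(2n-h+k)/2$. Moreover, for each such $(h,k)$ there are exactly three special tuples with these $\sigma_0$ and $\sigma_1\tau$, corresponding to $\tau\in\{(h,k),(h,2n-h),(k,2n-h)\}$.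
   Context: Permutation products are read left to right ($\sigma\sigma'$: first $\sigma$, then $\sigma'$); $(a,b,c)$ denotes the cycle $a\mapsto b\mapsto c\mapsto a$. An admissible 4-tuple is $(\sigma_0,\sigma_\infty,\sigma_1,\tau)\in S_{2n}^4$ with $\sigma_0$ a product of $n$ disjoint transpositions, $\sigma_\infty$ a $2n$-cycle, $\sigma_1$ a product of $n-2$ disjoint transpositions, $\tau$ a transposition, and $\sigma_0\sigma_\infty\sigma_1\tau=\mathrm{id}$. It is special if $\sigma_\infty=(2n,2n-1,\dots,1)$ and $\sigma_1(2n)=\tau(2n)=2n$. *)

theory Defs
  imports "HOL-Combinatorics.Combinatorics"
begin

(* Permutations of {1..2n} are functions nat => nat that permute {1..2n}.
   Products are read left to right: lr_prod [p1,...,pm] = first p1, then p2, ...,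
   i.e. pm o ... o p1. *)
fun lr_prod :: "(nat \<Rightarrow> nat) list \<Rightarrow> nat \<Rightarrow> nat" where
  "lr_prod [] = id"
| "lr_prod (p # ps) = lr_prod ps \<circ> p"

definition pair_entries :: "(nat \<times> nat) list \<Rightarrow> nat list" where
  "pair_entries ps = concat (map (\<lambda>(a,b). [a,b]) ps)"

definition transps :: "(nat \<times> nat) list \<Rightarrow> (nat \<Rightarrow> nat) list" where
  "transps ps = map (\<lambda>(a,b). transpose a b) ps"

definition prod_disj_transp :: "nat set \<Rightarrow> nat \<Rightarrow> (nat \<Rightarrow> nat) \<Rightarrow> bool" where
  "prod_disj_transp S m \<sigma> \<longleftrightarrow>
     (\<exists>ps. length ps = m \<and> distinct (pair_entries ps) \<and> set (pair_entries ps) \<subseteq> S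
           \<and> \<sigma> = lr_prod (transps ps))"

definition prod_disj_transp_3cycle :: "nat set \<Rightarrow> nat \<Rightarrow> (nat \<Rightarrow> nat) \<Rightarrow> bool" where
  "prod_disj_transp_3cycle S m \<sigma> \<longleftrightarrow>
     (\<exists>ps a b c. length ps = m \<and> distinct (pair_entries ps @ [a,b,c])
           \<and> set (pair_entries ps @ [a,b,c]) \<subseteq> S
           \<and> \<sigma> = lr_prod (transps ps @ [cycle_of_list [a,b,c]]))"

definition full_cycle :: "nat set \<Rightarrow> (nat \<Rightarrow> nat) \<Rightarrow> bool" where
  "full_cycle S \<sigma> \<longleftrightarrow> (\<exists>xs. distinct xs \<and> set xs = S \<and> \<sigma> = cycle_of_list xs)"

definition is_transposition :: "nat set \<Rightarrow> (nat \<Rightarrow> nat) \<Rightarrow> bool" where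
  "is_transposition S \<tau> \<longleftrightarrow> (\<exists>a\<in>S. \<exists>b\<in>S. a \<noteq> b \<and> \<tau> = transpose a b)"

definition admissible :: "nat \<Rightarrow> (nat \<Rightarrow> nat) \<Rightarrow> (nat \<Rightarrow> nat) \<Rightarrow> (nat \<Rightarrow> nat) \<Rightarrow> (nat \<Rightarrow> nat) \<Rightarrow> bool" where
  "admissible n s0 sinf s1 t \<longleftrightarrow>
     prod_disj_transp {1..2*n} n s0 \<and> full_cycle {1..2*n} sinf \<and>
     prod_disj_transp {1..2*n} (n - 2) s1 \<and> is_transposition {1..2*n} t \<and>
     lr_prod [s0, sinf, s1, t] = id"

definition sigma_inf :: "nat \<Rightarrow> nat \<Rightarrow> nat" where
  "sigma_inf n = cycle_of_list (rev [1..<2*n+1])"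

definition special :: "nat \<Rightarrow> (nat \<Rightarrow> nat) \<Rightarrow> (nat \<Rightarrow> nat) \<Rightarrow> (nat \<Rightarrow> nat) \<Rightarrow> (nat \<Rightarrow> nat) \<Rightarrow> bool" where
  "special n s0 sinf s1 t \<longleftrightarrow>
     admissible n s0 sinf s1 t \<and> sinf = sigma_inf n \<and> s1 (2*n) = 2*n \<and> t (2*n) = 2*n"

definition sigma0_hk :: "nat \<Rightarrow> nat \<Rightarrow> nat \<Rightarrow> nat \<Rightarrow> nat" where
  "sigma0_hk n h k = lr_prod
     (map (\<lambda>i. transpose i (2*n+1-i)) [1..<h+1]
      @ map (\<lambda>j. transpose (h+j) (k+1-j)) [1..<(k-h) div 2 + 1]
      @ map (\<lambda>t. transpose (k+t) (2*n-h+1-t)) [1..<(2*n-h-k) div 2 + 1])"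

definition rho_hk :: "nat \<Rightarrow> nat \<Rightarrow> nat \<Rightarrow> nat \<Rightarrow> nat" where
  "rho_hk n h k = lr_prod
     (map (\<lambda>i. transpose i (2*n-i)) [1..<h]
      @ map (\<lambda>j. transpose (h+j) (k-j)) [1..<(k-h) div 2]
      @ map (\<lambda>t. transpose (k+t) (2*n-h-t)) [1..<(2*n-h-k) div 2]
      @ [cycle_of_list [2*n-h, h, k]])"

definition good_hk :: "nat \<Rightarrow> nat \<Rightarrow> nat \<Rightarrow> bool" where
  "good_hk n h k \<longleftrightarrow> 1 \<le> h \<and> h \<le> n - 2 \<and> h < k \<and> k < 2*n - h \<and> even (k - h)"

end

theory Submission
  imports Defs
begin


lemma lr_prod_append: "lr_prod (xs @ ys) = lr_prod ys \<circ> lr_prod xs"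
  by (induction xs) auto

lemma pe_simps[simp]: "pair_entries [] = []" "pair_entries ((a,b)#ps) = a # b # pair_entries ps"
  "pair_entries (ps @ qs) = pair_entries ps @ pair_entries qs"
  by (auto simp: pair_entries_def)

lemma transps_simps[simp]: "transps [] = []" "transps ((a,b)#ps) = transpose a b # transps ps"
  "transps (ps @ qs) = transps ps @ transps qs"
  by (auto simp: transps_def)

lemma set_pe: "set (pair_entries ps) = fst ` set ps \<union> snd ` set ps"
  by (induction ps) force+

lemma length_pe[simp]: "length (pair_entries ps) = 2 * length ps"
  by (induction ps) auto

lemma distinct_pe: "distinct (pair_entries ps) \<longleftrightarrow> distinct (map fst ps @ map snd ps)"
  by (induction ps) (fastforce simp: set_pe)+

lemma L2: "x \<notin> set (pair_entries ps) \<Longrightarrow> lr_prod (transps ps) x = x"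
proof (induction ps)
  case (Cons p ps) then show ?case by (cases p) (auto simp: transpose_def)
qed simp

lemma L1: "distinct (pair_entries ps) \<Longrightarrow> (a,b) \<in> set ps \<Longrightarrow>
   lr_prod (transps ps) a = b \<and> lr_prod (transps ps) b = a"
proof (induction ps)
  case (Cons p ps)
  obtain c d where p: "p = (c,d)" by (cases p)
  show ?case
  proof (cases "(a,b) = (c,d)")
    case True
    then show ?thesis using Cons.prems p by (auto simp: L2)
  next
    case False
    then have ab: "(a,b) \<in> set ps" using Cons.prems p by auto
    then have "a \<in> set (pair_entries ps)" "b \<in> set (pair_entries ps)" 
      by (force simp: set_pe)+
    then have "a \<noteq> c" "a \<noteq> d" "b \<noteq> c" "b \<noteq> d" using Cons.prems p by auto
    then show ?thesis using Cons.IH Cons.prems ab p by (auto simp: transpose_def)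
  qed
qed simp

lemma LG: assumes "distinct (pair_entries ps)"
  "\<And>p q. (p,q) \<in> set ps \<Longrightarrow> f p = q \<and> f q = p"
  "\<And>x. x \<notin> set (pair_entries ps) \<Longrightarrow> f x = x"
  shows "lr_prod (transps ps) = f"
proof
  fix x show "lr_prod (transps ps) x = f x"
  proof (cases "x \<in> set (pair_entries ps)")
    case True
    then obtain p q where "(p,q) \<in> set ps" "x = p \<or> x = q" by (force simp: set_pe)
    then show ?thesis using L1[OF assms(1)] assms(2) by metis
  next
    case False then show ?thesis using L2 assms(3) by auto
  qed
qed

lemma cycle_nth: assumes "distinct cs" "i < length cs"
  shows "cycle_of_list cs (cs ! i) = cs ! (Suc i mod length cs)"
proof -
  have "map (cycle_of_list cs) cs = rotate1 cs" using cyclic_rotation[OF assms(1), of 1] by simp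
  then have "map (cycle_of_list cs) cs ! i = rotate1 cs ! i" by simp
  then show ?thesis using assms by (simp add: nth_rotate1)
qed

lemma sigma_inf_val: assumes "1 \<le> y" "y \<le> 2*n"
  shows "sigma_inf n y = (if y = 1 then 2*n else y - 1)"
proof -
  let ?cs = "rev [1..<2*n+1]"
  have d: "distinct ?cs" by simp
  have len: "length ?cs = 2*n" by simp
  have yi: "?cs ! (2*n - y) = y" using assms
    by (subst rev_nth) (auto simp del: upt_Suc)
  have "sigma_inf n y = ?cs ! (Suc (2*n-y) mod (2*n))"
    using cycle_nth[OF d, of "2*n-y"] yi len assms unfolding sigma_inf_def by simp
  also have "\<dots> = (if y = 1 then 2*n else y - 1)"
    using assms by (cases "y = 1") (auto simp: rev_nth simp del: upt_Suc)
  finally show ?thesis .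
qed

lemma sigma_inf_out: "y \<notin> {1..2*n} \<Longrightarrow> sigma_inf n y = y"
  unfolding sigma_inf_def by (rule id_outside_supp) auto

lemma sigma_inf_bij: "bij (sigma_inf n)"
  unfolding sigma_inf_def using cycle_permutes permutes_bij by blast

lemma cyc3: "distinct [a,b,c] \<Longrightarrow> cycle_of_list [a,b,c] a = b \<and> cycle_of_list [a,b,c] b = c
   \<and> cycle_of_list [a,b,c] c = a \<and> (\<forall>x. x \<notin> {a,b,c} \<longrightarrow> cycle_of_list [a,b,c] x = x)"
  by (auto simp: transpose_def)




definition P0 :: "nat \<Rightarrow> nat \<Rightarrow> nat \<Rightarrow> (nat \<times> nat) list" where
  "P0 n h k = map (\<lambda>i. (i, 2*n+1-i)) [1..<h+1]
      @ map (\<lambda>j. (h+j, k+1-j)) [1..<(k-h) div 2 + 1]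
      @ map (\<lambda>t. (k+t, 2*n-h+1-t)) [1..<(2*n-h-k) div 2 + 1]"

lemma sigma0_P0: "sigma0_hk n h k = lr_prod (transps (P0 n h k))"
  unfolding sigma0_hk_def P0_def transps_def by (simp add: comp_def del: upt_Suc)

lemma good_obtain: assumes "good_hk n h k"
  obtains p q where "k = h + 2*p" "n = h + p + q" "1 \<le> p" "1 \<le> q" "1 \<le> h"
proof -
  from assms have e: "even (k-h)" "h < k" "k < 2*n-h" "1 \<le> h" by (auto simp: good_hk_def)
  then obtain p where "k - h = 2*p" by (metis evenE)
  then have k: "k = h + 2*p" using e by simp
  show ?thesis using that[OF k, of "n-h-p"] e k by simp
qed

lemma P0_distinct: assumes "k = h + 2*p" "n = h + p + q" "1 \<le> p" "1 \<le> q" "1 \<le> h"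
  shows "distinct (pair_entries (P0 n h k))"
proof -
  have d1: "(k-h) div 2 = p" "(2*n-h-k) div 2 = q" using assms by auto
  show ?thesis unfolding distinct_pe P0_def d1
    using assms by (auto simp: inj_on_def distinct_map comp_def simp del: upt_Suc)
qed




lemma P0_sub: assumes "k = h + 2*p" "n = h + p + q" "1 \<le> p" "1 \<le> q" "1 \<le> h"
  shows "set (pair_entries (P0 n h k)) \<subseteq> {1..2*n}"
proof -
  have d1: "(k-h) div 2 = p" "(2*n-h-k) div 2 = q" using assms by auto
  show ?thesis unfolding set_pe P0_def d1
    using assms by (auto simp del: upt_Suc)
qed

lemma P0_len: assumes "k = h + 2*p" "n = h + p + q" "1 \<le> p" "1 \<le> q" "1 \<le> h"
  shows "length (P0 n h k) = n"
proof -
  have d1: "(k-h) div 2 = p" "(2*n-h-k) div 2 = q" using assms by auto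
  show ?thesis unfolding P0_def d1 using assms by simp
qed

lemma P0_set: assumes "k = h + 2*p" "n = h + p + q" "1 \<le> p" "1 \<le> q" "1 \<le> h"
  shows "set (pair_entries (P0 n h k)) = {1..2*n}"
proof (rule card_subset_eq)
  show "card (set (pair_entries (P0 n h k))) = card {1..2*n}"
    using distinct_card[OF P0_distinct[OF assms]] P0_len[OF assms] by simp
qed (use P0_sub[OF assms] in auto)

definition F0 :: "nat \<Rightarrow> nat \<Rightarrow> nat \<Rightarrow> nat \<Rightarrow> nat" where
  "F0 n h k x = (if x \<in> {1..2*n} then
      (if x \<le> h then 2*n+1-x else if x \<le> k then h+k+1-x else if x \<le> 2*n-h then 2*n-h+k+1-x
       else 2*n+1-x) else x)"

lemma sigma0_F0: assumes "k = h + 2*p" "n = h + p + q" "1 \<le> p" "1 \<le> q" "1 \<le> h"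
  shows "sigma0_hk n h k = F0 n h k"
  unfolding sigma0_P0
proof (rule LG[OF P0_distinct[OF assms]])
  have d1: "(k-h) div 2 = p" "(2*n-h-k) div 2 = q" using assms by auto
  fix a b assume "(a,b) \<in> set (P0 n h k)"
  then show "F0 n h k a = b \<and> F0 n h k b = a"
    unfolding P0_def d1 F0_def using assms by (auto simp del: upt_Suc)
next
  fix x assume "x \<notin> set (pair_entries (P0 n h k))"
  then show "F0 n h k x = x" unfolding P0_set[OF assms] F0_def by auto
qed




definition RP :: "nat \<Rightarrow> nat \<Rightarrow> nat \<Rightarrow> (nat \<times> nat) list" where
  "RP n h k = map (\<lambda>i. (i, 2*n-i)) [1..<h]
      @ map (\<lambda>j. (h+j, k-j)) [1..<(k-h) div 2]
      @ map (\<lambda>t. (k+t, 2*n-h-t)) [1..<(2*n-h-k) div 2]"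

lemma rho_RP: "rho_hk n h k = cycle_of_list [2*n-h, h, k] \<circ> lr_prod (transps (RP n h k))"
  unfolding rho_hk_def RP_def transps_def by (simp add: lr_prod_append comp_def del: upt_Suc)

context
  fixes n h k p q :: nat
  assumes hpq: "k = h + 2*p" "n = h + p + q" "1 \<le> p" "1 \<le> q" "1 \<le> h"
begin

lemma d1': "(k-h) div 2 = p" "(2*n-h-k) div 2 = q" using hpq by auto

definition "Fix6 = {2*n, h, k, 2*n-h, h+p, h+2*p+q}"

lemma RP_distinct: "distinct (map fst (RP n h k) @ map snd (RP n h k))"
  unfolding RP_def d1'
  using hpq by (auto simp: inj_on_def distinct_map comp_def simp del: upt_Suc)

lemma RP_sub: "set (pair_entries (RP n h k)) \<subseteq> {1..2*n} - Fix6"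
  unfolding set_pe RP_def d1' Fix6_def
  using hpq by (auto simp del: upt_Suc)

lemma RP_len: "length (RP n h k) = n - 3"
  unfolding RP_def d1' using hpq by simp

lemma Fix6_card: "card ({1..2*n} - Fix6) = 2*n - 6"
proof -
  have "card Fix6 = 6" unfolding Fix6_def using hpq by simp
  moreover have "Fix6 \<subseteq> {1..2*n}" unfolding Fix6_def using hpq by auto
  moreover have "finite Fix6" unfolding Fix6_def by simp
  ultimately show ?thesis using card_Diff_subset[of Fix6 "{1..2*n}"] by simp
qed

lemma RP_set: "set (pair_entries (RP n h k)) = {1..2*n} - Fix6"
proof (rule card_subset_eq)
  show "card (set (pair_entries (RP n h k))) = card ({1..2*n} - Fix6)"
    using distinct_card[OF RP_distinct[unfolded distinct_pe[symmetric]]] RP_len Fix6_card hpq by simp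
qed (use RP_sub in auto)

lemma RP_pairs: "(a,b) \<in> set (RP n h k) \<Longrightarrow>
   (1 \<le> a \<and> a < h \<and> b = 2*n-a) \<or> (h < a \<and> a < h+p \<and> b = h+k-a) \<or> (k < a \<and> a < h+2*p+q \<and> b = 2*n-h+k-a)"
  unfolding RP_def d1' using hpq by (auto simp del: upt_Suc)

definition G0 :: "nat \<Rightarrow> nat" where
  "G0 x = (if x \<in> {1..2*n} then
      (if x < h then 2*n-x else if x = h then h else if x < k then h+k-x else if x = k then k
       else if x < 2*n-h then 2*n-h+k-x else if x = 2*n-h then x else if x < 2*n then 2*n-x else x) else x)"

lemma RP_G0: "lr_prod (transps (RP n h k)) = G0"
proof (rule LG)
  show "distinct (pair_entries (RP n h k))" using RP_distinct distinct_pe by blast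
  fix a b assume "(a,b) \<in> set (RP n h k)"
  from RP_pairs[OF this] show "G0 a = b \<and> G0 b = a"
  proof (elim disjE conjE)
    assume "1 \<le> a" "a < h" "b = 2 * n - a"
    then show ?thesis unfolding G0_def using hpq by auto
  next
    assume "h < a" "a < h + p" "b = h + k - a"
    then show ?thesis unfolding G0_def using hpq by auto
  next
    assume "k < a" "a < h + 2 * p + q" "b = 2 * n - h + k - a"
    then show ?thesis unfolding G0_def using hpq by auto
  qed
next
  fix x assume "x \<notin> set (pair_entries (RP n h k))"
  then show "G0 x = x" unfolding RP_set G0_def Fix6_def using hpq by auto
qed

abbreviation "cyc \<equiv> cycle_of_list [2*n-h, h, k]"

lemma cy: "cyc (2*n-h) = h" "cyc h = k" "cyc k = 2*n-h" "\<And>x. x \<notin> {2*n-h, h, k} \<Longrightarrow> cyc x = x"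
proof -
  have dc: "distinct [2*n-h, h, k]" using hpq by auto
  note c = cyc3[OF dc]
  show "cyc (2*n-h) = h" "cyc h = k" "cyc k = 2*n-h" using c by auto
  show "\<And>x. x \<notin> {2*n-h, h, k} \<Longrightarrow> cyc x = x" using c by blast
qed

lemma rho_G0: "rho_hk n h k x = cyc (G0 x)"
  unfolding rho_RP RP_G0 by simp

lemma rho_sinf: "rho_hk n h k (sigma_inf n z) = sigma0_hk n h k z"
proof (cases "z \<in> {1..2*n}")
  case True
  show ?thesis
  proof (cases "z = 1")
    case True
    have g: "G0 (2*n) = 2*n" unfolding G0_def using hpq by auto
    have c: "cyc (2*n) = 2*n" using cy(4) hpq by auto
    show ?thesis unfolding rho_G0 sigma0_F0[OF hpq]
      using hpq g c True sigma_inf_val[of 1 n] by (simp add: F0_def)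
  next
    case False
    then have s: "sigma_inf n z = z - 1" using sigma_inf_val[of z n] True by auto
    have F: "F0 n h k z = (if z \<le> h then 2*n+1-z else if z \<le> k then h+k+1-z else if z \<le> 2*n-h then 2*n-h+k+1-z
       else 2*n+1-z)" using True unfolding F0_def by simp
    consider "z \<le> h" | "z = h+1" | "h+2 \<le> z" "z \<le> k" | "z = k+1" | "k+2 \<le> z" "z \<le> 2*n-h"
      | "z = 2*n-h+1" | "2*n-h+2 \<le> z" using hpq by linarith
    then have "cyc (G0 (z-1)) = F0 n h k z"
    proof cases
      case 1
      have "G0 (z-1) = 2*n+1-z" using 1 True False hpq unfolding G0_def by auto
      moreover have "2*n+1-z \<notin> {2*n-h, h, k}" using 1 True False hpq by auto
      ultimately show ?thesis using cy(4) F 1 by auto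
    next
      case 2
      have "G0 (z-1) = h" using 2 True False hpq unfolding G0_def by auto
      then show ?thesis using cy(2) F 2 hpq by auto
    next
      case 3
      have "G0 (z-1) = h+k+1-z" using 3 True False hpq unfolding G0_def by auto
      moreover have "h+k+1-z \<notin> {2*n-h, h, k}" using 3 True False hpq by auto
      ultimately show ?thesis using cy(4) F 3 hpq by auto
    next
      case 4
      have "G0 (z-1) = k" using 4 True False hpq unfolding G0_def by auto
      then show ?thesis using cy(3) F 4 hpq by auto
    next
      case 5
      have "G0 (z-1) = 2*n-h+k+1-z" using 5 True False hpq unfolding G0_def by auto
      moreover have "2*n-h+k+1-z \<notin> {2*n-h, h, k}" using 5 True False hpq by auto
      ultimately show ?thesis using cy(4) F 5 hpq by auto
    next
      case 6
      have "G0 (z-1) = 2*n-h" using 6 True False hpq unfolding G0_def by auto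
      then show ?thesis using cy(1) F 6 hpq by auto
    next
      case 7
      have "G0 (z-1) = 2*n+1-z" using 7 True False hpq unfolding G0_def by auto
      moreover have "2*n+1-z \<notin> {2*n-h, h, k}" using 7 True False hpq by auto
      ultimately show ?thesis using cy(4) F 7 hpq by auto
    qed
    then show ?thesis unfolding rho_G0 sigma0_F0[OF hpq] s .
  qed
next
  case False
  have "G0 z = z" using False unfolding G0_def by auto
  moreover have "z \<notin> {2*n-h, h, k}" using False hpq by auto
  moreover have "F0 n h k z = z" unfolding F0_def by (rule if_not_P[OF False])
  ultimately show ?thesis unfolding rho_G0 sigma0_F0[OF hpq] sigma_inf_out[OF False]
    using cy(4) by simp
qed

lemma rho_fix: "{x \<in> {1..2*n}. rho_hk n h k x = x} = {2*n, (k+h) div 2, (2*n-h+k) div 2}"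
proof -
  have e: "(k+h) div 2 = h+p" "(2*n-h+k) div 2 = h+2*p+q" using hpq by auto
  have "rho_hk n h k x = x \<longleftrightarrow> x \<in> {2*n, h+p, h+2*p+q}" if x: "x \<in> {1..2*n}" for x
  proof (cases "x \<in> {2*n-h, h, k}")
    case True
    then show ?thesis unfolding rho_G0 G0_def using x hpq cy by auto
  next
    case False
    have "G0 x \<notin> {2*n-h, h, k}" unfolding G0_def using x hpq False by auto
    then have "rho_hk n h k x = G0 x" unfolding rho_G0 using cy(4) by blast
    then show ?thesis unfolding G0_def using x hpq False by auto
  qed
  then show ?thesis unfolding e using hpq by auto
qed

end



lemma LP_invol: assumes "distinct (pair_entries ps)"
  shows "lr_prod (transps ps) (lr_prod (transps ps) x) = x"
proof (cases "x \<in> set (pair_entries ps)")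
  case True
  then obtain p q where "(p,q) \<in> set ps" "x = p \<or> x = q" by (force simp: set_pe)
  then show ?thesis using L1[OF assms] by metis
next
  case False then show ?thesis using L2 by simp
qed

lemma LP_in: assumes "distinct (pair_entries ps)" "x \<in> set (pair_entries ps)"
  shows "lr_prod (transps ps) x \<in> set (pair_entries ps) \<and> lr_prod (transps ps) x \<noteq> x"
proof -
  obtain p q where pq: "(p,q) \<in> set ps" "x = p \<or> x = q" using assms(2) by (force simp: set_pe)
  have "p \<noteq> q" using assms(1) pq(1)
    by (induction ps) (auto simp: set_pe)
  moreover have "p \<in> set (pair_entries ps)" "q \<in> set (pair_entries ps)" using pq(1) by (force simp: set_pe)+
  ultimately show ?thesis using L1[OF assms(1) pq(1)] pq(2) by auto
qed

context
  fixes n h k p q :: nat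
  assumes hpq: "k = h + 2*p" "n = h + p + q" "1 \<le> p" "1 \<le> q" "1 \<le> h"
begin

abbreviation "T3 \<equiv> {transpose h k, transpose h (2*n-h), transpose k (2*n-h)}"

lemma G0_invol: "G0 n h k (G0 n h k x) = x"
  using LP_invol[of "RP n h k" x] RP_distinct[OF hpq] RP_G0[OF hpq] distinct_pe by metis

lemma G0_C: "x \<in> {2*n-h, h, k} \<Longrightarrow> G0 n h k x = x"
  using hpq unfolding G0_def[OF hpq] by auto

lemma rhoC: "rho_hk n h k h = k" "rho_hk n h k k = 2*n-h" "rho_hk n h k (2*n-h) = h"
  using cy[OF hpq] G0_C unfolding rho_G0[OF hpq] by auto

lemma rho_notC: assumes "x \<notin> {2*n-h, h, k}"
  shows "rho_hk n h k (rho_hk n h k x) = x \<and> rho_hk n h k x \<notin> {2*n-h, h, k}"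
proof -
  have g: "G0 n h k x \<notin> {2*n-h, h, k}"
    using G0_C[of "G0 n h k x"] G0_invol[of x] assms by auto
  then have "rho_hk n h k x = G0 n h k x" using cy(4)[OF hpq] rho_G0[OF hpq] by metis
  moreover have "rho_hk n h k (G0 n h k x) = x" using cy(4)[OF hpq] rho_G0[OF hpq] G0_invol assms by metis
  ultimately show ?thesis using g by simp
qed

lemma rho_2n: "rho_hk n h k (2*n) = 2*n"
  using rho_fix[OF hpq] hpq by blast

lemma s1_form: assumes "t \<in> T3"
  shows "prod_disj_transp {1..2*n} (n-2) (t \<circ> rho_hk n h k)"
proof -
  have dC: "distinct [2*n-h, h, k]" using hpq by auto
  obtain e1 e2 where e: "t \<circ> cycle_of_list [2*n-h, h, k] = transpose e1 e2" "e1 \<in> {2*n-h, h, k}"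
     "e2 \<in> {2*n-h, h, k}" "e1 \<noteq> e2"
  proof -
    consider "t = transpose h k" | "t = transpose h (2*n-h)" | "t = transpose k (2*n-h)" using assms by blast
    then show ?thesis
    proof cases
      case 1
      have "t \<circ> cycle_of_list [2*n-h, h, k] = transpose k (2*n-h)"
        using dC unfolding 1 by (auto simp: transpose_def)
      then show ?thesis using that dC by auto
    next
      case 2
      have "t \<circ> cycle_of_list [2*n-h, h, k] = transpose h k"
        using dC unfolding 2 by (auto simp: transpose_def)
      then show ?thesis using that dC by auto
    next
      case 3
      have "t \<circ> cycle_of_list [2*n-h, h, k] = transpose h (2*n-h)"
        using dC unfolding 3 by (auto simp: transpose_def)
      then show ?thesis using that dC by auto
    qed
  qed
  let ?ps = "RP n h k @ [(e1,e2)]"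
  have C6: "{2*n-h, h, k} \<subseteq> Fix6 n h k p q" unfolding Fix6_def[OF hpq] by auto
  have "distinct (pair_entries ?ps)"
    using RP_distinct[OF hpq, folded distinct_pe] RP_set[OF hpq] e C6 by auto
  moreover have "length ?ps = n - 2" using RP_len[OF hpq] hpq by simp
  moreover have "set (pair_entries ?ps) \<subseteq> {1..2*n}" using RP_set[OF hpq] e hpq by auto
  moreover have "t \<circ> rho_hk n h k = lr_prod (transps ?ps)"
  proof -
    have "lr_prod (transps ?ps) = transpose e1 e2 \<circ> lr_prod (transps (RP n h k))"
      by (simp add: lr_prod_append)
    also have "\<dots> = (t \<circ> cycle_of_list [2*n-h, h, k]) \<circ> lr_prod (transps (RP n h k))" using e(1) by simp
    also have "\<dots> = t \<circ> rho_hk n h k" unfolding rho_RP by (simp add: comp_assoc)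
    finally show ?thesis by simp
  qed
  ultimately show ?thesis unfolding prod_disj_transp_def by blast
qed

lemma sigma0_invol: "sigma0_hk n h k (sigma0_hk n h k x) = x"
  unfolding sigma0_P0 using LP_invol P0_distinct[OF hpq] by blast

lemma T3_props: assumes "t \<in> T3"
  shows "is_transposition {1..2*n} t" "t (2*n) = 2*n" "t \<circ> t = id"
proof -
  have C: "h \<in> {1..2*n}" "k \<in> {1..2*n}" "2*n-h \<in> {1..2*n}" "h \<noteq> k" "h \<noteq> 2*n-h" "k \<noteq> 2*n-h"
    "2*n \<noteq> h" "2*n \<noteq> k" "2*n \<noteq> 2*n-h" using hpq by auto
  show "is_transposition {1..2*n} t" using assms C unfolding is_transposition_def by blast
  show "t (2*n) = 2*n" using assms C by (auto simp: transpose_def)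
  show "t \<circ> t = id" using assms by auto
qed

lemma tuples_sup: assumes "t \<in> T3"
  shows "special n (sigma0_hk n h k) (sigma_inf n) (lr_prod [rho_hk n h k, t]) t
     \<and> lr_prod [lr_prod [rho_hk n h k, t], t] = rho_hk n h k"
proof -
  note tp = T3_props[OF assms]
  have l: "lr_prod [rho_hk n h k, t] = t \<circ> rho_hk n h k" by simp
  have pd0: "prod_disj_transp {1..2*n} n (sigma0_hk n h k)"
    unfolding prod_disj_transp_def
    using P0_len[OF hpq] P0_distinct[OF hpq] P0_set[OF hpq] sigma0_P0 by blast
  have fc: "full_cycle {1..2*n} (sigma_inf n)"
    unfolding full_cycle_def sigma_inf_def by (intro exI[of _ "rev [1..<2*n+1]"]) auto
  have idd: "lr_prod [sigma0_hk n h k, sigma_inf n, t \<circ> rho_hk n h k, t] = id"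
  proof
    fix x
    have "lr_prod [sigma0_hk n h k, sigma_inf n, t \<circ> rho_hk n h k, t] x
        = t (t (rho_hk n h k (sigma_inf n (sigma0_hk n h k x))))" by simp
    also have "\<dots> = rho_hk n h k (sigma_inf n (sigma0_hk n h k x))"
      using fun_cong[OF tp(3)] by simp
    also have "\<dots> = x" using rho_sinf[OF hpq] sigma0_invol by simp
    finally show "lr_prod [sigma0_hk n h k, sigma_inf n, t \<circ> rho_hk n h k, t] x = id x" by simp
  qed
  have s2n: "(t \<circ> rho_hk n h k) (2*n) = 2*n" using rho_2n tp(2) by simp
  have adm: "admissible n (sigma0_hk n h k) (sigma_inf n) (t \<circ> rho_hk n h k) t"
    unfolding admissible_def using pd0 fc s1_form[OF assms] tp(1) idd by blast
  have sp: "special n (sigma0_hk n h k) (sigma_inf n) (t \<circ> rho_hk n h k) t"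
    unfolding special_def using adm s2n tp(2) by blast
  have "lr_prod [t \<circ> rho_hk n h k, t] = rho_hk n h k"
  proof
    fix x show "lr_prod [t \<circ> rho_hk n h k, t] x = rho_hk n h k x" using fun_cong[OF tp(3)] by simp
  qed
  then show ?thesis unfolding l using sp by blast
qed

lemma bad_transp: assumes E: "\<And>x. rho_hk n h k (t (rho_hk n h k x)) = t x"
  and t: "t = transpose u v" and u: "u \<in> {2*n-h, h, k}" and v: "v \<notin> {2*n-h, h, k}"
  shows False
proof -
  have nv: "rho_hk n h k v \<notin> {2*n-h, h, k}" using rho_notC[OF v] by blast
  have d: "h \<noteq> k" "h \<noteq> 2*n-h" "k \<noteq> 2*n-h" using hpq by auto
  consider "u = h" | "u = k" | "u = 2*n-h" using u by blast
  then show False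
  proof cases
    case 1
    have "rho_hk n h k v = 2*n-h" using E[of "2*n-h"] rhoC d v t 1 by (auto simp: transpose_def)
    then show False using nv by auto
  next
    case 2
    have "rho_hk n h k v = h" using E[of h] rhoC d v t 2 by (auto simp: transpose_def)
    then show False using nv by auto
  next
    case 3
    have "rho_hk n h k v = k" using E[of k] rhoC d v t 3 by (auto simp: transpose_def)
    then show False using nv by auto
  qed
qed

lemma tuples_sub: assumes "special n s0 sinf s1 t" "lr_prod [s1, t] = rho_hk n h k"
  shows "t \<in> T3 \<and> sinf = sigma_inf n \<and> s1 = lr_prod [rho_hk n h k, t]"
proof -
  from assms(1) have adm: "admissible n s0 sinf s1 t" and si: "sinf = sigma_inf n"
    unfolding special_def by blast+
  from adm have it: "is_transposition {1..2*n} t" and pd1: "prod_disj_transp {1..2*n} (n - 2) s1"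
    unfolding admissible_def by blast+
  from it obtain u v where uv: "u \<in> {1..2*n}" "v \<in> {1..2*n}" "u \<noteq> v" "t = transpose u v"
    unfolding is_transposition_def by blast
  from pd1 obtain ps where ps: "distinct (pair_entries ps)" "s1 = lr_prod (transps ps)"
    unfolding prod_disj_transp_def by blast
  have s1i: "s1 (s1 x) = x" for x using LP_invol[OF ps(1)] ps(2) by simp
  have tt: "t (t x) = x" for x using uv(4) by simp
  have r0: "t \<circ> s1 = rho_hk n h k" using assms(2) by simp
  have r: "rho_hk n h k x = t (s1 x)" for x using fun_cong[OF r0, of x] by simp
  have s1r: "s1 x = t (rho_hk n h k x)" for x using r tt by simp
  have E: "rho_hk n h k (t (rho_hk n h k x)) = t x" for x
  proof -
    have "t (rho_hk n h k (t (rho_hk n h k x))) = x" using s1i[of x] s1r by simp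
    then have "t (t (rho_hk n h k (t (rho_hk n h k x)))) = t x" by simp
    then show ?thesis using tt by simp
  qed
  have d: "h \<noteq> k" "h \<noteq> 2*n-h" "k \<noteq> 2*n-h" using hpq by auto
  have "t \<in> T3"
  proof (cases "u \<in> {2*n-h, h, k}")
    case uT: True
    show ?thesis
    proof (cases "v \<in> {2*n-h, h, k}")
      case True
      with uT uv(3,4) show ?thesis by (auto simp: transpose_commute)
    next
      case False
      then show ?thesis using bad_transp[OF E uv(4) uT] by blast
    qed
  next
    case False
    show ?thesis
    proof (cases "v \<in> {2*n-h, h, k}")
      case True
      have tvu: "t = transpose v u" using uv(4) by (simp add: transpose_commute)
      show ?thesis using bad_transp[OF E tvu True False] by blast
    next
      case vF: False
      have "rho_hk n h k (t k) = t h" using E[of h] rhoC by simp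
      then have "2*n - h = h" using False vF uv(4) rhoC by (auto simp: transpose_def)
      then show ?thesis using d by simp
    qed
  qed
  moreover have "s1 = lr_prod [rho_hk n h k, t]" using s1r by auto
  ultimately show ?thesis using si by blast
qed

lemma tuples: "{(s0, sinf, s1, t). special n s0 sinf s1 t \<and> s0 = sigma0_hk n h k \<and> lr_prod [s1, t] = rho_hk n h k}
        = (\<lambda>t. (sigma0_hk n h k, sigma_inf n, lr_prod [rho_hk n h k, t], t)) ` T3"
proof (intro equalityI subsetI)
  fix X assume "X \<in> {(s0, sinf, s1, t). special n s0 sinf s1 t \<and> s0 = sigma0_hk n h k \<and> lr_prod [s1, t] = rho_hk n h k}"
  then obtain s0 sinf s1 t where X: "X = (s0, sinf, s1, t)" "special n s0 sinf s1 t" "s0 = sigma0_hk n h k"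
    "lr_prod [s1, t] = rho_hk n h k" by (auto split: prod.splits)
  have T: "t \<in> T3 \<and> sinf = sigma_inf n \<and> s1 = lr_prod [rho_hk n h k, t]" by (rule tuples_sub[OF X(2,4)])
  then have "X = (\<lambda>t. (sigma0_hk n h k, sigma_inf n, lr_prod [rho_hk n h k, t], t)) t"
    using X(1,3) by simp
  then show "X \<in> (\<lambda>t. (sigma0_hk n h k, sigma_inf n, lr_prod [rho_hk n h k, t], t)) ` T3"
    using T by (intro image_eqI) auto
next
  fix X assume "X \<in> (\<lambda>t. (sigma0_hk n h k, sigma_inf n, lr_prod [rho_hk n h k, t], t)) ` T3"
  then obtain t where t: "t \<in> T3" "X = (sigma0_hk n h k, sigma_inf n, lr_prod [rho_hk n h k, t], t)"
    by (rule imageE) simp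
  have S: "special n (sigma0_hk n h k) (sigma_inf n) (lr_prod [rho_hk n h k, t]) t
     \<and> lr_prod [lr_prod [rho_hk n h k, t], t] = rho_hk n h k" by (rule tuples_sup[OF t(1)])
  show "X \<in> {(s0, sinf, s1, t). special n s0 sinf s1 t \<and> s0 = sigma0_hk n h k \<and> lr_prod [s1, t] = rho_hk n h k}"
    unfolding t(2) using S by (simp only: mem_Collect_eq case_prod_conv simp_thms)
qed

lemma tuples_card: "card ((\<lambda>t. (sigma0_hk n h k, sigma_inf n, lr_prod [rho_hk n h k, t], t)) ` T3) = 3"
proof -
  have inj: "inj_on (\<lambda>t. (sigma0_hk n h k, sigma_inf n, lr_prod [rho_hk n h k, t], t)) T3"
    by (rule inj_onI) simp
  have d: "h \<noteq> k" "h \<noteq> 2*n-h" "k \<noteq> 2*n-h" using hpq by auto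
  have n1: "transpose h k \<noteq> transpose h (2*n-h)"
  proof
    assume "transpose h k = transpose h (2*n-h)"
    from fun_cong[OF this, of h] show False using d by simp
  qed
  have n2: "transpose h k \<noteq> transpose k (2*n-h)"
  proof
    assume "transpose h k = transpose k (2*n-h)"
    from fun_cong[OF this, of h] show False using d by simp
  qed
  have n3: "transpose h (2*n-h) \<noteq> transpose k (2*n-h)"
  proof
    assume "transpose h (2*n-h) = transpose k (2*n-h)"
    from fun_cong[OF this, of h] show False using d by simp
  qed
  have "card T3 = 3" using n1 n2 n3 by simp
  then show ?thesis using card_image[OF inj] by simp
qed

end



context
  fixes n :: nat and s0 \<rho> :: "nat \<Rightarrow> nat" and a b c :: nat
  assumes A1: "\<And>x. x \<in> {1..2*n} \<Longrightarrow> s0 x \<in> {1..2*n} \<and> s0 x \<noteq> x \<and> s0 (s0 x) = x"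
  and A2: "\<And>x. 1 \<le> x \<Longrightarrow> x < 2*n \<Longrightarrow> \<rho> x = s0 (Suc x)"
  and A3: "\<rho> (2*n) = 2*n" "s0 1 = 2*n"
  and A4: "distinct [a,b,c]" "a \<in> {1..2*n}" "b \<in> {1..2*n}" "c \<in> {1..2*n}"
          "\<rho> a = b" "\<rho> b = c" "\<rho> c = a"
  and A5: "\<And>x. x \<notin> {a,b,c} \<Longrightarrow> \<rho> (\<rho> x) = x"
begin

lemma Cp: assumes "x \<in> {a,b,c}"
  shows "\<rho> x \<in> {a,b,c} \<and> \<rho> x \<noteq> x \<and> \<rho> (\<rho> x) \<noteq> x \<and> x \<in> {1..2*n} \<and> x \<noteq> 2*n"
  using assms A4 A3 by auto

lemma prop1: assumes "s0 u = v" "1 \<le> u" "u+3 \<le> v" "v \<le> 2*n" "u \<notin> {a,b,c}"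
  shows "s0 (u+1) = v-1"
proof -
  define w where "w = s0 (u+1)"
  have u1: "u+1 \<in> {1..2*n}" using assms by auto
  have rw: "\<rho> u = w" using A2[of u] assms unfolding w_def by auto
  have "w \<noteq> u"
  proof
    assume "w = u"
    then have "s0 u = u+1" using A1[OF u1] unfolding w_def by auto
    then show False using assms by auto
  qed
  have rw2: "\<rho> w = u" using A5[OF assms(5)] rw by simp
  have w: "w \<in> {1..2*n}" using A1[OF u1] unfolding w_def by auto
  have "w \<noteq> 2*n" using rw2 A3 assms by auto
  then have "s0 (Suc w) = u" using A2[of w] w rw2 by auto
  then have "s0 u = Suc w" using A1[of "Suc w"] w \<open>w \<noteq> 2*n\<close> by auto
  then show ?thesis using assms(1) unfolding w_def by simp
qed

lemma gap2: assumes "s0 u = u+2" "1 \<le> u" "u+2 \<le> 2*n" "u \<notin> {a,b,c}"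
  shows False
proof -
  define w where "w = s0 (u+1)"
  have u1: "u+1 \<in> {1..2*n}" using assms by auto
  have rw: "\<rho> u = w" using A2[of u] assms unfolding w_def by auto
  have "w \<noteq> u"
  proof
    assume "w = u"
    then have "s0 u = u+1" using A1[OF u1] unfolding w_def by auto
    then show False using assms by auto
  qed
  have rw2: "\<rho> w = u" using A5[OF assms(4)] rw by simp
  have w: "w \<in> {1..2*n}" using A1[OF u1] unfolding w_def by auto
  have "w \<noteq> 2*n" using rw2 A3 assms by auto
  then have "s0 (Suc w) = u" using A2[of w] w rw2 by auto
  then have "s0 u = Suc w" using A1[of "Suc w"] w \<open>w \<noteq> 2*n\<close> by auto
  then have "w = u+1" using assms by simp
  then show False using A1[OF u1] unfolding w_def by simp
qed

lemma iter: assumes "s0 u = v" "1 \<le> u" "v \<le> 2*n"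
  shows "u + 2*j + 1 \<le> v \<Longrightarrow> (\<forall>i<j. u+i \<notin> {a,b,c}) \<Longrightarrow> s0 (u+j) = v - j"
proof (induction j)
  case 0 then show ?case using assms by simp
next
  case (Suc j)
  have "s0 (u+j) = v - j" using Suc by auto
  moreover have "u+j \<notin> {a,b,c}" using Suc.prems(2) by blast
  ultimately have "s0 (u+j+1) = v-j-1"
    using prop1[of "u+j" "v-j"] Suc.prems assms by auto
  then show ?case by simp
qed

lemma segment: assumes "s0 u = v" "1 \<le> u" "u < v" "v \<le> 2*n" "\<And>x. u \<le> x \<Longrightarrow> x < v \<Longrightarrow> x \<notin> {a,b,c}"
  shows "odd (v - u)"
proof
  assume e: "even (v-u)"
  then obtain j' where j': "v - u = 2*j'" by (metis evenE)
  define j where "j = j' - 1"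
  have j: "v - u = 2*j + 2" using j' assms(3) unfolding j_def by auto
  have "s0 (u+j) = v - j" using iter[OF assms(1,2,4), of j] assms(5) j by auto
  moreover have "v - j = (u+j) + 2" using j by simp
  moreover have "u+j \<notin> {a,b,c}" using assms(5)[of "u+j"] j by auto
  moreover have "u+j+2 \<le> 2*n" using j assms(3,4) by linarith
  ultimately show False using gap2[of "u+j"] assms(2) by simp
qed

lemma classify:
  "\<exists>h p q. 1 \<le> h \<and> 1 \<le> p \<and> 1 \<le> q \<and> n = h+p+q \<and> (\<forall>x\<in>{1..2*n}. s0 x = F0 n h (h+2*p) x)"
proof -
  define C where "C = {a,b,c}"
  have fC: "finite C" "C \<noteq> {}" unfolding C_def by auto
  define h where "h = Min C"
  have hC: "h \<in> C" unfolding h_def using fC by (rule Min_in)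
  have hmin: "\<And>x. x \<in> C \<Longrightarrow> h \<le> x" unfolding h_def using fC(1) by (rule Min_le)
  have CC: "\<And>x. x \<in> C \<Longrightarrow> \<rho> x \<in> C \<and> \<rho> x \<noteq> x \<and> \<rho> (\<rho> x) \<noteq> x \<and> x \<in> {1..2*n} \<and> x \<noteq> 2*n"
    unfolding C_def by (rule Cp)
  have h1: "1 \<le> h" "h \<le> 2*n" "h \<noteq> 2*n" using CC[OF hC] by auto
  have n1: "1 \<le> n" using h1 by linarith
  have out: "s0 (1+j) = 2*n - j" if "j \<le> n-1" "j < h" for j
  proof -
    have "\<forall>i<j. 1+i \<notin> {a,b,c}"
    proof (intro allI impI notI)
      fix i assume "i < j" "1+i \<in> {a,b,c}"
      then have "h \<le> 1+i" using hmin unfolding C_def by blast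
      then show False using \<open>i < j\<close> that(2) by linarith
    qed
    moreover have "1 + 2*j + 1 \<le> 2*n" using that n1 by linarith
    ultimately show ?thesis using iter[of 1 "2*n" j] A3(2) by simp
  qed
  have hn: "h < n"
  proof (rule ccontr)
    assume "\<not> h < n"
    then have hn: "n \<le> h" by simp
    have sn: "s0 n = n+1" using out[of "n-1"] hn n1 by simp
    show False
    proof (cases "h = n")
      case True
      have "\<rho> n = s0 (n+1)" using A2[of n] n1 by simp
      also have "\<dots> = n" using A1[of n] sn n1 by auto
      finally show False using CC[OF hC] True by auto
    next
      case False
      define j where "j = 2*n-h-1"
      have j: "j \<le> n - 1" "j < h" "1 + j = 2*n - h" using False hn h1 unfolding j_def by arith+
      have "s0 (2*n - j) = 1 + j" using out[OF j(1,2)] A1[of "1+j"] j h1 by auto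
      moreover have "2*n - j = Suc h" using j h1 by auto
      ultimately have "\<rho> h = 2*n - h" using A2[of h] h1 j by auto
      moreover have "\<rho> h \<in> C" using CC[OF hC] by auto
      ultimately show False using hmin[of "\<rho> h"] False hn by auto
    qed
  qed
  have sx: "s0 x = 2*n+1-x" if "1 \<le> x" "x \<le> h" for x
    using out[of "x-1"] that hn by auto
  have sx': "s0 (2*n+1-x) = x" if "1 \<le> x" "x \<le> h" for x
    using A1[of x] sx[OF that] that hn by auto
  define m where "m = 2*n - h"
  have rm: "\<rho> m = h"
  proof -
    have "1 \<le> m" "m < 2*n" "Suc m = 2*n+1-h" using h1 hn unfolding m_def by arith+
    then show ?thesis using A2[of m] sx'[of h] h1 by simp
  qed
  have mC: "m \<in> C"
  proof (rule ccontr)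
    assume "m \<notin> C"
    then have "\<rho> (\<rho> m) = m" using A5 unfolding C_def by blast
    then have "\<rho> (\<rho> h) = h" using rm by simp
    then show False using CC[OF hC] by blast
  qed
  define k where "k = \<rho> h"
  have kC: "k \<in> C" "k \<noteq> h" using CC[OF hC] unfolding k_def by auto
  have km: "k \<noteq> m"
  proof
    assume "k = m"
    then have "\<rho> (\<rho> h) = h" using rm unfolding k_def by simp
    then show False using CC[OF hC] by blast
  qed
  have hm: "h \<noteq> m" using hn unfolding m_def by auto
  have C3: "C = {h,k,m}"
  proof -
    have "card C = 3" using A4(1) unfolding C_def by simp
    moreover have "card {h,k,m} = 3" using km kC hm by simp
    moreover have "{h,k,m} \<subseteq> C" using hC kC mC by blast
    ultimately show ?thesis using card_subset_eq[OF fC(1)] by metis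
  qed
  have rk: "\<rho> k = m"
  proof -
    have "\<rho> k \<in> {h,k,m}" "\<rho> k \<noteq> k" using CC[OF kC(1)] C3 by auto
    moreover have "\<rho> k \<noteq> h" using CC[OF hC] unfolding k_def by blast
    ultimately show ?thesis by blast
  qed
  have ks: "s0 (h+1) = k" using A2[of h] h1 hn unfolding k_def by auto
  have hk: "h < k" using hmin[OF kC(1)] kC(2) by linarith
  have kin: "k \<in> {1..2*n}" using CC[OF kC(1)] by blast
  have k2n: "k \<noteq> 2*n" using CC[OF kC(1)] by blast
  have kltm: "k < m"
  proof (rule ccontr)
    assume "\<not> k < m"
    then have "m < k" using km by auto
    define x where "x = 2*n+1-k"
    have x: "1 \<le> x" "x \<le> h" "k = 2*n+1-x" using \<open>m < k\<close> kin unfolding x_def m_def by auto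
    have "s0 k = x" using sx'[OF x(1,2)] x(3) by simp
    moreover have "s0 k = h+1" using A1[of "h+1"] ks h1 hn by auto
    ultimately show False using x by auto
  qed
  have C3': "{a,b,c} = {h,k,m}" using C3 unfolding C_def .
  have hk1: "h+1 < k"
  proof (rule ccontr)
    assume "\<not> h+1 < k"
    then have "k = h+1" using hk by auto
    then show False using A1[of "h+1"] ks h1 hn by auto
  qed
  have oddk: "odd (k - (h+1))"
    by (rule segment[OF ks]) (use hk1 kin kltm C3' in auto)
  obtain p where p: "k = h + 2*p" "1 \<le> p"
  proof -
    have "even (k-h)" using oddk hk by (simp add: Suc_diff_Suc[symmetric] )
    then obtain p where "k - h = 2*p" by (metis evenE)
    then show ?thesis using that[of p] hk by auto
  qed
  have sk1: "s0 (k+1) = m" using A2[of k] rk kin k2n by auto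
  have k1m: "k+1 < m"
  proof (rule ccontr)
    assume "\<not> k+1 < m"
    then have "k+1 = m" using kltm by auto
    then show False using A1[of "k+1"] sk1 kin k2n by auto
  qed
  have m2n: "m \<le> 2*n" unfolding m_def by auto
  have oddm: "odd (m - (k+1))"
    by (rule segment[OF sk1]) (use k1m m2n C3' kltm hk in auto)
  obtain q where q: "m = k + 2*q" "1 \<le> q"
  proof -
    have "even (m-k)" using oddm k1m by (simp add: Suc_diff_Suc[symmetric] )
    then obtain q where "m - k = 2*q" by (metis evenE)
    then show ?thesis using that[of q] kltm by auto
  qed
  have nn: "n = h+p+q" using p q hn unfolding m_def by auto
  have seg1: "s0 (h+1+j) = k - j" if "j \<le> p - 1" for j
    using iter[OF ks _ , of j] that p kin C3' kltm by auto
  have seg2: "s0 (k+1+j) = m - j" if "j \<le> q - 1" for j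
    using iter[OF sk1 _ m2n, of j] that q C3' kltm hk by auto
  have "s0 x = F0 n h k x" if x: "x \<in> {1..2*n}" for x
  proof -
    consider "x \<le> h" | "h < x" "x \<le> h + p" | "h+p < x" "x \<le> k" | "k < x" "x \<le> k+q"
      | "k + q < x" "x \<le> m" | "m < x" by linarith
    then show ?thesis
    proof cases
      case 1 then show ?thesis using sx[of x] x unfolding F0_def by auto
    next
      case 2 then show ?thesis using seg1[of "x-h-1"] x p unfolding F0_def by auto
    next
      case 3
      define y where "y = h+k+1-x"
      have e: "y-h-1 \<le> p-1" "h+1+(y-h-1) = y" "k-(y-h-1) = x" using 3 p unfolding y_def by auto
      have "s0 y = x" using seg1[OF e(1)] unfolding e(2,3) .
      have yin: "y \<in> {1..2*n}" using 3 x p kin unfolding y_def m_def by auto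
      then have "s0 x = y" using A1[OF yin] \<open>s0 y = x\<close> by auto
      then show ?thesis using 3 x p unfolding F0_def y_def by auto
    next
      case 4 then show ?thesis using seg2[of "x-k-1"] x q p nn unfolding F0_def m_def by auto
    next
      case 5
      define y where "y = m+k+1-x"
      have e: "y-k-1 \<le> q-1" "k+1+(y-k-1) = y" "m-(y-k-1) = x" using 5 q unfolding y_def by auto
      have "s0 y = x" using seg2[OF e(1)] unfolding e(2,3) .
      have yin: "y \<in> {1..2*n}" using 5 x q p nn kin kltm m2n unfolding y_def m_def by auto
      then have "s0 x = y" using A1[OF yin] \<open>s0 y = x\<close> by auto
      then show ?thesis using 5 x p q nn unfolding F0_def y_def m_def by auto
    next
      case 6
      define y where "y = 2*n+1-x"
      have "s0 y = x" using sx[of y] 6 x unfolding y_def m_def by auto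
      have yin: "y \<in> {1..2*n}" using 6 x h1 hn unfolding y_def m_def by auto
      then have "s0 x = y" using A1[OF yin] \<open>s0 y = x\<close> by auto
      then show ?thesis using 6 x p q nn unfolding F0_def y_def m_def by auto
    qed
  qed
  then show ?thesis using p q nn hn h1 by blast
qed

end



theorem mainTheorem14:
  fixes n :: nat
  shows
  "(\<forall>s0 sinf s1 t.
      special n s0 sinf s1 t \<and> prod_disj_transp_3cycle {1..2*n} (n - 3) (lr_prod [s1, t]) \<longrightarrow>
      (\<exists>h k. good_hk n h k \<and> s0 = sigma0_hk n h k \<and> lr_prod [s1, t] = rho_hk n h k
         \<and> {x \<in> {1..2*n}. lr_prod [s1, t] x = x} = {2*n, (k+h) div 2, (2*n-h+k) div 2}))
   \<and>
   (\<forall>h k. good_hk n h k \<longrightarrow>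
      {(s0, sinf, s1, t). special n s0 sinf s1 t \<and> s0 = sigma0_hk n h k \<and> lr_prod [s1, t] = rho_hk n h k}
        = (\<lambda>t. (sigma0_hk n h k, sigma_inf n, lr_prod [rho_hk n h k, t], t))
            ` {transpose h k, transpose h (2*n-h), transpose k (2*n-h)}
      \<and> card {(s0, sinf, s1, t). special n s0 sinf s1 t \<and> s0 = sigma0_hk n h k
                                \<and> lr_prod [s1, t] = rho_hk n h k} = 3)"
proof (intro conjI allI impI)
  fix h k assume g: "good_hk n h k"
  obtain p q where hpq: "k = h + 2*p" "n = h + p + q" "1 \<le> p" "1 \<le> q" "1 \<le> h"
    using good_obtain[OF g] by metis
  show "{(s0, sinf, s1, t). special n s0 sinf s1 t \<and> s0 = sigma0_hk n h k \<and> lr_prod [s1, t] = rho_hk n h k}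
        = (\<lambda>t. (sigma0_hk n h k, sigma_inf n, lr_prod [rho_hk n h k, t], t))
            ` {transpose h k, transpose h (2*n-h), transpose k (2*n-h)}"
    by (rule tuples[OF hpq])
  show "card {(s0, sinf, s1, t). special n s0 sinf s1 t \<and> s0 = sigma0_hk n h k
                                \<and> lr_prod [s1, t] = rho_hk n h k} = 3"
    unfolding tuples[OF hpq] by (rule tuples_card[OF hpq])
next
  fix s0 sinf s1 t
  assume H: "special n s0 sinf s1 t \<and> prod_disj_transp_3cycle {1..2*n} (n - 3) (lr_prod [s1, t])"
  define \<rho> where "\<rho> = lr_prod [s1, t]"
  have rt: "\<rho> x = t (s1 x)" for x unfolding \<rho>_def by simp
  from H have sp: "special n s0 sinf s1 t" and c3: "prod_disj_transp_3cycle {1..2*n} (n - 3) \<rho>"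
    unfolding \<rho>_def by blast+
  from sp have adm: "admissible n s0 sinf s1 t" and si: "sinf = sigma_inf n"
    and s12: "s1 (2*n) = 2*n" and t2: "t (2*n) = 2*n" unfolding special_def by blast+
  from adm have pd0: "prod_disj_transp {1..2*n} n s0" and idd: "lr_prod [s0, sinf, s1, t] = id"
    unfolding admissible_def by blast+
  from pd0 obtain ps0 where ps0: "length ps0 = n" "distinct (pair_entries ps0)"
    "set (pair_entries ps0) \<subseteq> {1..2*n}" "s0 = lr_prod (transps ps0)"
    unfolding prod_disj_transp_def by blast
  have set0: "set (pair_entries ps0) = {1..2*n}"
  proof (rule card_subset_eq)
    show "card (set (pair_entries ps0)) = card {1..2*n}"
      using distinct_card[OF ps0(2)] ps0(1) by simp
  qed (use ps0(3) in auto)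
  have s0inv: "s0 (s0 x) = x" for x using LP_invol[OF ps0(2)] ps0(4) by simp
  have A1: "s0 x \<in> {1..2*n} \<and> s0 x \<noteq> x \<and> s0 (s0 x) = x" if "x \<in> {1..2*n}" for x
    using LP_in[OF ps0(2), of x] that set0 ps0(4) s0inv by auto
  from c3 obtain ps a b c where c3': "length ps = n - 3" "distinct (pair_entries ps @ [a,b,c])"
    "set (pair_entries ps @ [a,b,c]) \<subseteq> {1..2*n}"
    "\<rho> = lr_prod (transps ps @ [cycle_of_list [a,b,c]])"
    unfolding prod_disj_transp_3cycle_def by blast
  define L where "L = lr_prod (transps ps)"
  have rL: "\<rho> x = cycle_of_list [a,b,c] (L x)" for x using c3'(4) unfolding L_def
    by (simp add: lr_prod_append)
  have dps: "distinct (pair_entries ps)" and dabc: "distinct [a,b,c]"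
    and abcn: "a \<notin> set (pair_entries ps)" "b \<notin> set (pair_entries ps)" "c \<notin> set (pair_entries ps)"
    using c3'(2) by auto
  have abcin: "a \<in> {1..2*n}" "b \<in> {1..2*n}" "c \<in> {1..2*n}" using c3'(3) by auto
  note cyv = cyc3[OF dabc]
  have n1: "1 \<le> n" using abcin by auto
  have key: "\<rho> (sinf y) = s0 y" for y
  proof -
    have "(t \<circ> s1 \<circ> sinf \<circ> s0) (s0 y) = s0 y" using idd by (simp add: comp_assoc)
    then show ?thesis using s0inv rt by simp
  qed
  have A2: "\<rho> x = s0 (Suc x)" if "1 \<le> x" "x < 2*n" for x
    using key[of "Suc x"] sigma_inf_val[of "Suc x" n] that si by simp
  have A3a: "\<rho> (2*n) = 2*n" using rt s12 t2 by simp
  have A3b: "s0 1 = 2*n" using key[of 1] sigma_inf_val[of 1 n] n1 si A3a by simp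
  have A4: "\<rho> a = b" "\<rho> b = c" "\<rho> c = a" using rL L2[OF abcn(1)] L2[OF abcn(2)] L2[OF abcn(3)] cyv
    unfolding L_def by auto
  have A5: "\<rho> (\<rho> x) = x" if x: "x \<notin> {a,b,c}" for x
  proof (cases "x \<in> set (pair_entries ps)")
    case True
    have Ly: "L x \<in> set (pair_entries ps)" using LP_in[OF dps True] unfolding L_def by blast
    then have "L x \<notin> {a,b,c}" using abcn by auto
    then have "\<rho> x = L x" using rL cyv by auto
    moreover have "L (L x) = x" using LP_invol[OF dps] unfolding L_def by blast
    ultimately show ?thesis using rL cyv x by auto
  next
    case False
    then have "L x = x" using L2 unfolding L_def by blast
    then have "\<rho> x = x" using rL cyv x by auto
    then show ?thesis by simp
  qed
  obtain h p q where hpq: "1 \<le> h" "1 \<le> p" "1 \<le> q" "n = h+p+q"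
      and sF: "\<forall>x\<in>{1..2*n}. s0 x = F0 n h (h+2*p) x"
    using classify[OF A1 A2 A3a A3b dabc abcin A4 A5] by blast
  define k where "k = h + 2*p"
  have hpq': "k = h + 2*p" "n = h + p + q" "1 \<le> p" "1 \<le> q" "1 \<le> h" using hpq k_def by auto
  have good: "good_hk n h k" unfolding good_hk_def k_def using hpq by auto
  have s0eq: "s0 = sigma0_hk n h k"
  proof
    fix x show "s0 x = sigma0_hk n h k x"
    proof (cases "x \<in> {1..2*n}")
      case True then show ?thesis using sF sigma0_F0[OF hpq'] unfolding k_def by simp
    next
      case False
      then have "s0 x = x" using L2 ps0(4) set0 by auto
      moreover have "F0 n h k x = x" unfolding F0_def by (rule if_not_P[OF False])
      ultimately show ?thesis using sigma0_F0[OF hpq'] by simp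
    qed
  qed
  have reqr: "\<rho> = rho_hk n h k"
  proof
    fix y
    have "surj (sigma_inf n)" using sigma_inf_bij[of n] by (rule bij_is_surj)
    from surjD[OF this, of y] obtain z where z: "y = sigma_inf n z" ..
    have "\<rho> (sigma_inf n z) = s0 z" using key[of z] unfolding si .
    also have "\<dots> = sigma0_hk n h k z" unfolding s0eq ..
    also have "\<dots> = rho_hk n h k (sigma_inf n z)" using rho_sinf[OF hpq', of z] by (rule sym)
    finally show "\<rho> y = rho_hk n h k y" unfolding z .
  qed
  show "\<exists>h k. good_hk n h k \<and> s0 = sigma0_hk n h k \<and> lr_prod [s1, t] = rho_hk n h k
         \<and> {x \<in> {1..2*n}. lr_prod [s1, t] x = x} = {2*n, (k+h) div 2, (2*n-h+k) div 2}"
  proof (intro exI conjI)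
    show "good_hk n h k" by (rule good)
    show "s0 = sigma0_hk n h k" by (rule s0eq)
    show "lr_prod [s1, t] = rho_hk n h k" using reqr unfolding \<rho>_def .
    show "{x \<in> {1..2*n}. lr_prod [s1, t] x = x} = {2*n, (k+h) div 2, (2*n-h+k) div 2}"
      using rho_fix[OF hpq'] reqr unfolding \<rho>_def by simp
  qed
qed


end
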